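(* Let $\phi$ be any random number generation algorithm for $Y^n$ from the coin process $\mathbf X$ that satisfies the validity condition, and let $T$ be its stopping time. Then for every integer $m\ge 0$ and all real numbers $\tau,\lambda\ge 0$, \[ \Pr(T>m)\ \ge\ P_{Y^n}(\mathcal T_n^c(\tau)) - P_{X^m}(\mathcal S_m(\lambda)) - 2^{-\tau+\lambda} \ =\ P_{X^m}(\mathcal S_m^c(\lambda)) - P_{Y^n}(\mathcal T_n(\tau)) - 2^{-\tau+\lambda}, \] where \[ \mathcal S_m(\lambda)=\Big\{x^m\in\mathcal X^m:\log\tfrac{1}{P_{X^m}(x^m)}\ge\lambda\Big\},\qquad \mathcal T_n(\tau)=\Big\{y^n\in\mathcal Y^n:\log\tfrac{1}{P_{Y^n}(y^n)}\le\tau\Big\}, \] and complements are taken in $\mathcal X^m$ and $\mathcal Y^n$ respectively.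
   Context: Logarithms are base 2. Let $\mathcal X=\{1,\dots,M\}$ and $\mathcal Y=\{1,\dots,N\}$ be finite sets. The coin process $\mathbf X=\{X^m=(X_1,\dots,X_m)\}_{m\ge1}$ is a sequence of random vectors with distributions $P_{X^m}$ on $\mathcal X^m$ that are consistent ($\sum_{x_{m+1}}P_{X^{m+1}}(x^m,x_{m+1})=P_{X^m}(x^m)$), i.e. the finite-dimensional marginals of one random sequence $X_1,X_2,\dots$ (arbitrary, not necessarily stationary or ergodic); the target process $\mathbf Y=\{Y^n\}_{n\ge1}$ on $\mathcal Y$ is defined likewise. A random number generation (RNG) algorithm for $Y^n$ is a map $\phi:\bigcup_{i\ge0}\mathcal X^i\to\{\bot\}\cup\mathcal Y^n$, where $\mathcal X^0=\{\bot\}$ consists of the empty sequence. Its set of leaves $\mathcal L_\phi$ is the set of finite sequences $s$ with $\phi(s)\in\mathcal Y^n$ and $\phi(s')=\bot$ for every proper prefix $s'$ of $s$; $|s|$ is the length of $s$. For $x^m\in\mathcal X^m$ one writes $\phi(x^m)=y^n$ if some prefix $x^i$ ($i\le m$) of $x^m$ is a leaf with $\phi(x^i)=y^n$, and $\phi(x^m)=\bot$ otherwise. The stopping time $T$ is the smallest integer $m\ge0$ with $\phi(X^m)\in\mathcal Y^n$ ($T=\infty$ if there is none). The algorithm satisfies the validity condition if $\sum_{s\in\mathcal L_\phi:\,\phi(s)=y^n}P_{X^{|s|}}(s)=P_{Y^n}(y^n)$ for every $y^n\in\mathcal Y^n$ (equivalently $\lim_{m\to\infty}\Pr(\phi(X^m)=y^n)=P_{Y^n}(y^n)$).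 *)

theory Defs
  imports "HOL-Analysis.Analysis"
begin

text \<open>Sequences over a finite alphabet are lists; P k is the distribution of the
  first k symbols, as a function on lists (only lists of length k matter).\<close>

definition random_process :: "(nat \<Rightarrow> 'a::finite list \<Rightarrow> real) \<Rightarrow> bool" where
  "random_process P \<longleftrightarrow>
     (\<forall>k xs. P k xs \<ge> 0) \<and>
     (\<forall>k. (\<Sum>xs\<in>{xs. length xs = k}. P k xs) = 1) \<and>
     (\<forall>k xs. length xs = k \<longrightarrow> (\<Sum>x\<in>UNIV. P (Suc k) (xs @ [x])) = P k xs)"

text \<open>An RNG algorithm: None plays the role of \<bottom>; outputs lie in Y^n.\<close>
definition rng_algorithm :: "nat \<Rightarrow> ('a list \<Rightarrow> 'b list option) \<Rightarrow> bool" where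
  "rng_algorithm n phi \<longleftrightarrow> (\<forall>s y. phi s = Some y \<longrightarrow> length y = n)"

definition is_leaf :: "('a list \<Rightarrow> 'b list option) \<Rightarrow> 'a list \<Rightarrow> bool" where
  "is_leaf phi s \<longleftrightarrow> phi s \<noteq> None \<and> (\<forall>i<length s. phi (take i s) = None)"

definition valid_rng ::
  "(nat \<Rightarrow> 'a list \<Rightarrow> real) \<Rightarrow> (nat \<Rightarrow> 'b list \<Rightarrow> real) \<Rightarrow> nat \<Rightarrow> ('a list \<Rightarrow> 'b list option) \<Rightarrow> bool" where
  "valid_rng PX PY n phi \<longleftrightarrow>
     (\<forall>y. length y = n \<longrightarrow>
        ((\<lambda>s. PX (length s) s) has_sum PY n y) {s. is_leaf phi s \<and> phi s = Some y})"

text \<open>phi(x^m) = y^n iff some prefix x^i (i \<le> m) is a leaf mapped to y^n.\<close>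
definition phi_ext :: "('a list \<Rightarrow> 'b list option) \<Rightarrow> 'a list \<Rightarrow> 'b list option" where
  "phi_ext phi xs =
     (if \<exists>i\<le>length xs. is_leaf phi (take i xs)
      then phi (take (LEAST i. is_leaf phi (take i xs)) xs) else None)"

text \<open>Pr(T > m) = Pr(phi(X^m) = \<bottom>).\<close>
definition prob_T_gt ::
  "(nat \<Rightarrow> 'a list \<Rightarrow> real) \<Rightarrow> ('a list \<Rightarrow> 'b list option) \<Rightarrow> nat \<Rightarrow> real" where
  "prob_T_gt PX phi m = (\<Sum>xs\<in>{xs. length xs = m \<and> phi_ext phi xs = None}. PX m xs)"

text \<open>Convention: log(1/0) = \<infinity>.\<close>
definition S_set :: "(nat \<Rightarrow> 'a list \<Rightarrow> real) \<Rightarrow> nat \<Rightarrow> real \<Rightarrow> 'a list set" where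
  "S_set PX m lam = {xs. length xs = m \<and> (PX m xs = 0 \<or> log 2 (1 / PX m xs) \<ge> lam)}"

definition T_set :: "(nat \<Rightarrow> 'b list \<Rightarrow> real) \<Rightarrow> nat \<Rightarrow> real \<Rightarrow> 'b list set" where
  "T_set PY n tau = {ys. length ys = n \<and> PY n ys \<noteq> 0 \<and> log 2 (1 / PY n ys) \<le> tau}"

definition prob_of :: "(nat \<Rightarrow> 'a list \<Rightarrow> real) \<Rightarrow> nat \<Rightarrow> 'a list set \<Rightarrow> real" where
  "prob_of P k A = (\<Sum>xs\<in>A. P k xs)"

end

theory Submission
  imports Defs
begin

lemma rp_nonneg: "random_process P \<Longrightarrow> P k xs \<ge> 0"
  unfolding random_process_def by blast

lemma rp_total: "random_process P \<Longrightarrow> (\<Sum>xs\<in>{xs. length xs = k}. P k xs) = 1"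
  unfolding random_process_def by blast

lemma rp_cons: "random_process P \<Longrightarrow> length xs = k \<Longrightarrow> (\<Sum>x\<in>UNIV. P (Suc k) (xs @ [x])) = P k xs"
  unfolding random_process_def by blast

lemma fin_len: "finite {xs::'a::finite list. length xs = k}"
proof -
  have "finite {xs::'a list. set xs \<subseteq> UNIV \<and> length xs = k}"
    by (rule finite_lists_length_eq) simp
  thus ?thesis by simp
qed

lemma fin_len_sub: "finite {xs::'a::finite list. length xs = k \<and> Q xs}"
  by (rule finite_subset[OF _ fin_len[of k]]) auto

lemma ext_sum:
  fixes P :: "nat \<Rightarrow> 'a::finite list \<Rightarrow> real"
  assumes rp: "random_process P" and len: "length s = k"
  shows "P k s = (\<Sum>xs\<in>{xs. length xs = k + d \<and> take k xs = s}. P (k+d) xs)"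
proof (induction d)
  case 0
  have "{xs. length xs = k + 0 \<and> take k xs = s} = {s}" using len by auto
  thus ?case by simp
next
  case (Suc d)
  let ?Z = "{zs. length zs = k + d \<and> take k zs = s}"
  have img: "{xs. length xs = k + Suc d \<and> take k xs = s} = (\<lambda>(zs,x). zs @ [x]) ` (?Z \<times> UNIV)"
  proof (intro set_eqI iffI)
    fix xs assume "xs \<in> {xs. length xs = k + Suc d \<and> take k xs = s}"
    hence xs: "length xs = k + Suc d" "take k xs = s" by auto
    then obtain zs x where e: "xs = zs @ [x]"
      by (metis add_Suc_right length_Suc_conv_rev rev.simps(2) rev_rev_ident)
    with xs have "length zs = k + d" by simp
    moreover have "take k zs = s" using xs e \<open>length zs = k + d\<close> by simp
    ultimately show "xs \<in> (\<lambda>(zs,x). zs @ [x]) ` (?Z \<times> UNIV)" using e by force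
  next
    fix xs assume "xs \<in> (\<lambda>(zs,x). zs @ [x]) ` (?Z \<times> UNIV)"
    then show "xs \<in> {xs. length xs = k + Suc d \<and> take k xs = s}" by auto
  qed
  have inj: "inj_on (\<lambda>(zs,x). zs @ [x]) (?Z \<times> UNIV)"
    by (auto simp: inj_on_def)
  have "(\<Sum>xs\<in>{xs. length xs = k + Suc d \<and> take k xs = s}. P (k + Suc d) xs)
      = (\<Sum>p\<in>?Z \<times> UNIV. P (k + Suc d) ((\<lambda>(zs,x). zs @ [x]) p))"
    unfolding img sum.reindex[OF inj] by (simp add: comp_def case_prod_unfold)
  also have "\<dots> = (\<Sum>zs\<in>?Z. \<Sum>x\<in>UNIV. P (Suc (k + d)) (zs @ [x]))"
    by (simp add: sum.cartesian_product split_def)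
  also have "\<dots> = (\<Sum>zs\<in>?Z. P (k + d) zs)"
    by (rule sum.cong) (auto intro: rp_cons[OF rp])
  finally show ?case using Suc by simp
qed

lemma ext_sum':
  fixes P :: "nat \<Rightarrow> 'a::finite list \<Rightarrow> real"
  assumes rp: "random_process P" and "length s \<le> m"
  shows "P (length s) s = (\<Sum>xs\<in>{xs. length xs = m \<and> take (length s) xs = s}. P m xs)"
  using ext_sum[OF rp refl, of s "m - length s"] assms(2) by simp

lemma key:
  fixes PX :: "nat \<Rightarrow> 'a::finite list \<Rightarrow> real"
  assumes rpx: "random_process PX" and valid: "valid_rng PX PY n phi" and ly: "length y = n"
    and D: "D \<subseteq> {xs. length xs = m \<and> phi_ext phi xs = Some y}"
  shows "(\<Sum>xs\<in>D. PX m xs) \<le> PY n y"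
proof -
  let ?L = "{s. is_leaf phi s \<and> phi s = Some y \<and> length s \<le> m}"
  define l where "l xs = take (LEAST i. is_leaf phi (take i xs)) xs" for xs :: "'a list"
  have finD: "finite D" by (rule finite_subset[OF D fin_len_sub])
  have finL: "finite ?L"
  proof (rule finite_subset)
    show "?L \<subseteq> (\<Union>k\<le>m. {s. length s = k})" by auto
    show "finite (\<Union>k\<le>m. {s::'a list. length s = k})" using fin_len by auto
  qed
  have lprop: "l xs \<in> ?L \<and> take (length (l xs)) xs = l xs" if "xs \<in> D" for xs
  proof -
    from that D have xs: "length xs = m" "phi_ext phi xs = Some y" by auto
    have ex: "\<exists>i\<le>length xs. is_leaf phi (take i xs)"
      using xs(2) unfolding phi_ext_def by (auto split: if_splits)
    then obtain i where "is_leaf phi (take i xs)" by blast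
    hence lf: "is_leaf phi (l xs)" unfolding l_def by (rule LeastI)
    have "phi (l xs) = Some y" using xs(2) ex unfolding phi_ext_def l_def by simp
    moreover have "length (l xs) \<le> m" unfolding l_def using xs(1) by simp
    moreover have "take (length (l xs)) xs = l xs" unfolding l_def
      by (metis append_take_drop_id take_append take_all order_refl length_take diff_self_eq_0 take0 append_Nil2)
    ultimately show ?thesis using lf by simp
  qed
  have "(\<Sum>xs\<in>D. PX m xs) = (\<Sum>s\<in>?L. \<Sum>xs\<in>{xs\<in>D. l xs = s}. PX m xs)"
    by (rule sum.group[symmetric]) (use finD finL lprop in auto)
  also have "\<dots> \<le> (\<Sum>s\<in>?L. \<Sum>xs\<in>{xs. length xs = m \<and> take (length s) xs = s}. PX m xs)"
  proof (rule sum_mono, rule sum_mono2)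
    fix s assume "s \<in> ?L"
    show "finite {xs. length xs = m \<and> take (length s) xs = s}" by (rule fin_len_sub)
    show "{xs \<in> D. l xs = s} \<subseteq> {xs. length xs = m \<and> take (length s) xs = s}"
      using lprop D by auto
    show "\<And>b. 0 \<le> PX m b" by (rule rp_nonneg[OF rpx])
  qed
  also have "\<dots> = (\<Sum>s\<in>?L. PX (length s) s)"
    by (rule sum.cong) (auto simp: ext_sum'[OF rpx])
  also have "\<dots> \<le> PY n y"
  proof (rule has_sum_mono_neutral)
    show "((\<lambda>s. PX (length s) s) has_sum (\<Sum>s\<in>?L. PX (length s) s)) ?L"
      using finL by simp
    show "((\<lambda>s. PX (length s) s) has_sum PY n y) {s. is_leaf phi s \<and> phi s = Some y}"
      using valid ly unfolding valid_rng_def by blast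
  qed (auto intro: rp_nonneg[OF rpx])
  finally show ?thesis .
qed


lemma phi_ext_Some: "phi_ext phi xs = Some y \<Longrightarrow> \<exists>s. phi s = Some y"
  unfolding phi_ext_def by (auto split: if_splits)

lemma small_prob:
  fixes p t :: real
  assumes "p \<ge> 0" "\<not> (p \<noteq> 0 \<and> log 2 (1 / p) \<le> t)"
  shows "p \<le> 2 powr (- t)"
proof (cases "p = 0")
  case False
  with assms have p: "p > 0" and l: "t < log 2 (1/p)" by auto
  hence "2 powr t < 1 / p" using less_log_iff[of 2 "1/p" t] by simp
  hence "p < 1 / 2 powr t" using p by (simp add: field_simps)
  thus ?thesis by (simp add: powr_minus_divide)
qed simp

lemma big_prob:
  fixes p l :: real
  assumes "\<not> (p = 0 \<or> log 2 (1 / p) \<ge> l)" "p \<ge> 0"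
  shows "2 powr (- l) \<le> p"
proof -
  from assms have p: "p > 0" and lt: "log 2 (1/p) < l" by auto
  hence "1 / p < 2 powr l" using log_less_iff[of 2 "1/p" l] by simp
  hence "1 / 2 powr l < p" using p by (simp add: field_simps)
  thus ?thesis by (simp add: powr_minus_divide)
qed

theorem theorem1:
  fixes PX :: "nat \<Rightarrow> 'a::finite list \<Rightarrow> real"
    and PY :: "nat \<Rightarrow> 'b::finite list \<Rightarrow> real"
    and phi :: "'a list \<Rightarrow> 'b list option"
    and n m :: nat and tau lam :: real
  assumes "random_process PX" and "random_process PY"
    and "rng_algorithm n phi" and "valid_rng PX PY n phi"
    and "tau \<ge> 0" and "lam \<ge> 0"
  shows "prob_T_gt PX phi m \<ge>
           prob_of PY n ({ys. length ys = n} - T_set PY n tau) - prob_of PX m (S_set PX m lam)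
             - 2 powr (- tau + lam)
       \<and> prob_of PY n ({ys. length ys = n} - T_set PY n tau) - prob_of PX m (S_set PX m lam)
             - 2 powr (- tau + lam)
         = prob_of PX m ({xs. length xs = m} - S_set PX m lam) - prob_of PY n (T_set PY n tau)
             - 2 powr (- tau + lam)"
proof -
  note rpx = assms(1) and rpy = assms(2)
  define A where "A = {xs::'a list. length xs = m}"
  define Yn where "Yn = {ys::'b list. length ys = n}"
  define S where "S = S_set PX m lam"
  define T where "T = T_set PY n tau"
  define N where "N = {xs\<in>A. phi_ext phi xs \<noteq> None}"
  define g where "g y = (\<Sum>xs\<in>{xs\<in>A - S. phi_ext phi xs = Some y}. PX m xs)" for y
  define B where "B = (\<lambda>xs. the (phi_ext phi xs)) ` {xs\<in>A - S. phi_ext phi xs \<noteq> None}"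
  have finA: "finite A" unfolding A_def by (rule fin_len)
  have finY: "finite Yn" unfolding Yn_def by (rule fin_len)
  have SA: "S \<subseteq> A" unfolding S_def A_def S_set_def by auto
  have TY: "T \<subseteq> Yn" unfolding T_def Yn_def T_set_def by auto
  have sA: "sum (PX m) A = 1" unfolding A_def by (rule rp_total[OF rpx])
  have sY: "sum (PY n) Yn = 1" unfolding Yn_def by (rule rp_total[OF rpy])
  have nx: "\<And>k xs. PX k xs \<ge> 0" by (rule rp_nonneg[OF rpx])
  have ny: "\<And>k xs. PY k xs \<ge> 0" by (rule rp_nonneg[OF rpy])
  have finN: "finite N" using finA unfolding N_def by simp
  have pt: "prob_T_gt PX phi m = 1 - sum (PX m) N"
  proof -
    have "A = {xs. length xs = m \<and> phi_ext phi xs = None} \<union> N"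
      "{xs. length xs = m \<and> phi_ext phi xs = None} \<inter> N = {}"
      unfolding A_def N_def by auto
    hence "sum (PX m) A = prob_T_gt PX phi m + sum (PX m) N"
      unfolding prob_T_gt_def using finA
      by (metis finite_Un sum.union_disjoint)
    thus ?thesis using sA by simp
  qed
  have N1: "sum (PX m) N \<le> sum (PX m) S + sum (PX m) (N - S)"
  proof -
    have "sum (PX m) N \<le> sum (PX m) (S \<union> (N - S))"
      by (rule sum_mono2) (use finA SA finN finite_subset[OF SA finA] in \<open>auto intro: nx\<close>)
    also have "\<dots> = sum (PX m) S + sum (PX m) (N - S)"
      by (rule sum.union_disjoint) (use finA SA finN finite_subset[OF SA finA] in auto)
    finally show ?thesis .
  qed
  have NSg: "sum (PX m) (N - S) = sum g Yn"
  proof -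
    have "sum (PX m) (N - S) = (\<Sum>y\<in>Yn. \<Sum>xs\<in>{xs\<in>N - S. the (phi_ext phi xs) = y}. PX m xs)"
    proof (rule sum.group[symmetric])
      show "finite (N - S)" using finN by simp
      show "finite Yn" by (rule finY)
      show "(\<lambda>xs. the (phi_ext phi xs)) ` (N - S) \<subseteq> Yn"
      proof
        fix y assume "y \<in> (\<lambda>xs. the (phi_ext phi xs)) ` (N - S)"
        then obtain xs where "xs \<in> N" "y = the (phi_ext phi xs)" by auto
        hence "phi_ext phi xs = Some y" unfolding N_def by auto
        then obtain s where "phi s = Some y" using phi_ext_Some by blast
        thus "y \<in> Yn" using assms(3) unfolding rng_algorithm_def Yn_def by blast
      qed
    qed
    also have "\<dots> = sum g Yn"
      unfolding g_def by (rule sum.cong[OF refl], rule sum.cong) (auto simp: N_def)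
    finally show ?thesis .
  qed
  have gle: "g y \<le> PY n y" if "y \<in> Yn" for y
    unfolding g_def
    by (rule key[OF rpx assms(4)]) (use that in \<open>auto simp: Yn_def A_def\<close>)
  have gT: "sum g T \<le> sum (PY n) T"
    by (rule sum_mono) (use gle TY in auto)
  have gnT: "g y \<le> (if y \<in> B then 2 powr (- tau) else 0)" if "y \<in> Yn - T" for y
  proof (cases "y \<in> B")
    case True
    have "g y \<le> PY n y" using that gle by auto
    also have "\<dots> \<le> 2 powr (- tau)"
      by (rule small_prob) (use that ny in \<open>auto simp: T_def T_set_def Yn_def\<close>)
    finally show ?thesis using True by simp
  next
    case False
    hence "{xs\<in>A - S. phi_ext phi xs = Some y} = {}" unfolding B_def by force
    hence "g y = 0" unfolding g_def by (simp only: sum.empty)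
    thus ?thesis using False by simp
  qed
  have finB: "finite B" unfolding B_def using finA by simp
  have cardB: "card B \<le> card (A - S)"
    unfolding B_def by (rule order.trans[OF card_image_le]) (use finA in \<open>auto intro: card_mono\<close>)
  have cardAS: "real (card (A - S)) * 2 powr (- lam) \<le> 1"
  proof -
    have "real (card (A - S)) * 2 powr (- lam) = (\<Sum>xs\<in>A - S. 2 powr (- lam))" by simp
    also have "\<dots> \<le> sum (PX m) (A - S)"
      by (rule sum_mono, rule big_prob) (auto simp: S_def S_set_def A_def intro: nx)
    also have "\<dots> \<le> sum (PX m) A" by (rule sum_mono2) (use finA in \<open>auto intro: nx\<close>)
    finally show ?thesis using sA by simp
  qed
  have gnTs: "sum g (Yn - T) \<le> 2 powr (- tau + lam)"
  proof -
    have "sum g (Yn - T) \<le> (\<Sum>y\<in>Yn - T. if y \<in> B then 2 powr (- tau) else 0)"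
      by (rule sum_mono) (rule gnT)
    also have "\<dots> = 2 powr (- tau) * real (card ((Yn - T) \<inter> B))"
      using finY by (simp add: sum.If_cases)
    also have "\<dots> \<le> 2 powr (- tau) * real (card (A - S))"
    proof -
      have "card ((Yn - T) \<inter> B) \<le> card B" by (rule card_mono[OF finB]) auto
      thus ?thesis using cardB by simp
    qed
    also have "\<dots> \<le> 2 powr (- tau) * 2 powr lam"
    proof -
      have "real (card (A - S)) \<le> 2 powr lam"
        using cardAS by (simp add: powr_minus_divide field_simps)
      thus ?thesis by simp
    qed
    also have "\<dots> = 2 powr (- tau + lam)" by (rule powr_add[symmetric])
    finally show ?thesis .
  qed
  have split: "sum g Yn = sum g T + sum g (Yn - T)"
    using finY TY by (metis add.commute sum.subset_diff)
  have PYc: "prob_of PY n (Yn - T) = 1 - prob_of PY n T"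
    unfolding prob_of_def using sY finY TY by (simp add: sum_diff)
  have PXc: "prob_of PX m (A - S) = 1 - prob_of PX m S"
    unfolding prob_of_def using sA finA SA by (simp add: sum_diff)
  have main: "prob_T_gt PX phi m \<ge> prob_of PY n (Yn - T) - prob_of PX m S - 2 powr (- tau + lam)"
    using pt N1 NSg split gT gnTs PYc unfolding prob_of_def by linarith
  show ?thesis using main PYc PXc unfolding A_def Yn_def S_def T_def by linarith
qed

end
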